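(* Let $k\ge 1$ be an integer and let $G$ be a finite simple graph with $\gamma^d_k(G)<\infty$. Let $S$ be a global defensive $k$-alliance in $G$ with $|S|=\gamma^d_k(G)$, and suppose that the induced subgraph $G\langle S\rangle$ has a $1$-perfect code. Let $H$ be a finite simple graph with at least two vertices. Then $G[H]$ has a global defensive $k$-alliance. Moreover, if $k\ge 2$, then $$\gamma^d_k(G[H])\leq n(H)\big(\gamma^d_k(G)-\gamma(G\langle S\rangle)\big)+\gamma(G\langle S\rangle),$$ where $\gamma(G\langle S\rangle)$ is the domination number of $G\langle S\rangle$.
   Context: All graphs are finite and simple; $n(H)=|V_H|$. For $S\subseteq V_G$ and $v\in V_G$, $N_S(v)=\{u\in S: uv\in E_G\}$ and $\bar S=V_G\setminus S$. For an integer $k$, a nonempty $S\subseteq V_G$ is a global defensive $k$-alliance in $G$ if every vertex outside $S$ has a neighbor in $S$ and $|N_S(v)|\ge |N_{\bar S}(v)|+k$ for every $v\in S$; $\gamma^d_k(G)$ is the minimum size of such a set ($\infty$ if none exists). $G\langle S\rangle$ is the subgraph of $G$ induced by $S$. A $1$-perfect code in a graph $F$ is a set $D\subseteq V_F$ such that the closed neighborhoods $N[x]=\{x\}\cup N(x)$, $x\in D$, partition $V_F$. The domination number $\gamma(F)$ is the minimum size of a dominating set of $F$. The lexicographic product $G[H]$ has vertex set $V_G\times V_H$, with $(g_1,h_1)\sim(g_2,h_2)$ iff $g_1g_2\in E_G$, or $g_1=g_2$ and $h_1h_2\in E_H$. *)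

theory Defs
  imports Main "HOL-Library.Extended_Nat"
begin

definition simple_graph :: "'a set \<Rightarrow> ('a \<Rightarrow> 'a \<Rightarrow> bool) \<Rightarrow> bool" where
  "simple_graph V E \<longleftrightarrow> finite V \<and> (\<forall>u v. E u v \<longrightarrow> u \<in> V \<and> v \<in> V)
     \<and> (\<forall>u v. E u v \<longrightarrow> E v u) \<and> (\<forall>u. \<not> E u u)"

definition nbhd_in :: "('a \<Rightarrow> 'a \<Rightarrow> bool) \<Rightarrow> 'a set \<Rightarrow> 'a \<Rightarrow> 'a set" where
  "nbhd_in E S v = {u \<in> S. E u v}"

definition global_def_alliance :: "'a set \<Rightarrow> ('a \<Rightarrow> 'a \<Rightarrow> bool) \<Rightarrow> int \<Rightarrow> 'a set \<Rightarrow> bool" where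
  "global_def_alliance V E k S \<longleftrightarrow> S \<noteq> {} \<and> S \<subseteq> V
     \<and> (\<forall>v \<in> V - S. \<exists>u \<in> S. E u v)
     \<and> (\<forall>v \<in> S. int (card (nbhd_in E S v)) \<ge> int (card (nbhd_in E (V - S) v)) + k)"

text \<open>gamma^d_k(G); infinity if no global defensive k-alliance exists (Inf {} = \<infinity>).\<close>
definition gamma_d :: "'a set \<Rightarrow> ('a \<Rightarrow> 'a \<Rightarrow> bool) \<Rightarrow> int \<Rightarrow> enat" where
  "gamma_d V E k = (INF S \<in> {S. global_def_alliance V E k S}. enat (card S))"

definition induced_edges :: "('a \<Rightarrow> 'a \<Rightarrow> bool) \<Rightarrow> 'a set \<Rightarrow> 'a \<Rightarrow> 'a \<Rightarrow> bool" where
  "induced_edges E S u v \<longleftrightarrow> u \<in> S \<and> v \<in> S \<and> E u v"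

definition closed_nbhd :: "'a set \<Rightarrow> ('a \<Rightarrow> 'a \<Rightarrow> bool) \<Rightarrow> 'a \<Rightarrow> 'a set" where
  "closed_nbhd V E x = insert x {u \<in> V. E x u}"

definition perfect_code :: "'a set \<Rightarrow> ('a \<Rightarrow> 'a \<Rightarrow> bool) \<Rightarrow> 'a set \<Rightarrow> bool" where
  "perfect_code V E D \<longleftrightarrow> D \<subseteq> V \<and> (\<forall>v \<in> V. \<exists>!x. x \<in> D \<and> v \<in> closed_nbhd V E x)"

definition dominating :: "'a set \<Rightarrow> ('a \<Rightarrow> 'a \<Rightarrow> bool) \<Rightarrow> 'a set \<Rightarrow> bool" where
  "dominating V E D \<longleftrightarrow> D \<subseteq> V \<and> (\<forall>v \<in> V - D. \<exists>u \<in> D. E u v)"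

definition domination_number :: "'a set \<Rightarrow> ('a \<Rightarrow> 'a \<Rightarrow> bool) \<Rightarrow> nat" where
  "domination_number V E = Min (card ` {D. dominating V E D})"

definition lex_edges :: "('a \<Rightarrow> 'a \<Rightarrow> bool) \<Rightarrow> ('b \<Rightarrow> 'b \<Rightarrow> bool) \<Rightarrow> 'a \<times> 'b \<Rightarrow> 'a \<times> 'b \<Rightarrow> bool" where
  "lex_edges EG EH p q \<longleftrightarrow> EG (fst p) (fst q) \<or> (fst p = fst q \<and> EH (snd p) (snd q))"

end

theory Submission
  imports Defs
begin

lemma a1: fixes a b k n ia ib :: int
  assumes "a \<ge> b + k" "n \<ge> 1" "k \<ge> 1" "ia \<ge> a*n" "ib \<le> b*n" shows "ia \<ge> ib + k"
proof -
  have "a*n \<ge> (b+k)*n" using assms by (intro mult_right_mono) auto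
  moreover have "k*n \<ge> k*1" using assms by (intro mult_left_mono) auto
  moreover have "(b+k)*n = b*n + k*n" by (simp add: algebra_simps)
  ultimately show ?thesis using assms by linarith
qed
lemma a2: fixes a b k n ia ib :: int
  assumes "a \<ge> b + k" "n \<ge> 1" "k \<ge> 1" "ia \<ge> a*n" "ib \<le> b*n + (n - 1)" shows "ia \<ge> ib + k"
proof -
  have "a*n \<ge> (b+k)*n" using assms by (intro mult_right_mono) auto
  moreover have "(n-1)*(k-1) \<ge> 0" using assms by simp
  ultimately show ?thesis using assms by (simp add: algebra_simps)
qed
lemma a3: fixes a b k n ia ib :: int
  assumes "a \<ge> b + k" "n \<ge> 1" "k \<ge> 2" "ia \<ge> (a - 1)*n + 1" "ib \<le> b*n + (n - 1)" shows "ia \<ge> ib + k"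
proof -
  have "a*n \<ge> (b+k)*n" using assms by (intro mult_right_mono) auto
  moreover have "(n-1)*(k-2) \<ge> 0" using assms by simp
  ultimately show ?thesis using assms by (simp add: algebra_simps)
qed
lemma a4: fixes n s d g :: nat assumes "g \<le> d" "d \<le> s" "n \<ge> 1"
  shows "n*(s-d)+d \<le> n*(s-g)+g"
proof -
  have "n*(s-g) = n*(s-d) + n*(d-g)" using assms by (simp add: diff_mult_distrib2)
  moreover have "n*(d-g) \<ge> 1*(d - g)" using assms by (intro mult_right_mono) auto
  ultimately show ?thesis using assms by linarith
qed

lemma ic2: "(Q::nat) \<le> b * n + (n - 1) \<Longrightarrow> n \<ge> 2 \<Longrightarrow> int Q \<le> int b * int n + (int n - 1)"
proof -
  assume a: "(Q::nat) \<le> b * n + (n - 1)" "n \<ge> 2"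
  have "int Q \<le> int (b * n + (n - 1))" using a(1) by (simp only: of_nat_le_iff)
  also have "\<dots> = int b * int n + (int n - 1)" using a(2) by (simp add: of_nat_diff)
  finally show ?thesis .
qed
lemma ic3: "(I::nat) \<ge> (a - 1) * n + 1 \<Longrightarrow> a \<ge> 1 \<Longrightarrow> int I \<ge> (int a - 1) * int n + 1"
proof -
  assume h: "(I::nat) \<ge> (a - 1) * n + 1" "a \<ge> 1"
  have e: "int (a - 1) = int a - 1" using h(2) by (simp add: of_nat_diff)
  have "(int a - 1) * int n + 1 = int (a - 1) * int n + 1" by (simp only: e)
  also have "\<dots> = int ((a - 1) * n + 1)" by (simp only: of_nat_add of_nat_mult of_nat_1)
  also have "\<dots> \<le> int I" using h(1) by (simp only: of_nat_le_iff)
  finally show ?thesis .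
qed
lemma ic1: "(I::nat) \<ge> a * n \<Longrightarrow> int I \<ge> int a * int n"
  by (metis of_nat_le_iff of_nat_mult)
lemma ic0: "(Q::nat) \<le> b * n \<Longrightarrow> int Q \<le> int b * int n"
  by (metis of_nat_le_iff of_nat_mult)

lemma gd_le:
  assumes "global_def_alliance V E k T"
  shows "gamma_d V E k \<le> enat (card T)"
  unfolding gamma_d_def using assms by (intro INF_lower) auto

theorem mainTheorem4:
  fixes VG :: "'a set" and EG :: "'a \<Rightarrow> 'a \<Rightarrow> bool"
    and VH :: "'b set" and EH :: "'b \<Rightarrow> 'b \<Rightarrow> bool"
    and k :: int and S :: "'a set"
  assumes "k \<ge> 1"
    and "simple_graph VG EG"
    and "gamma_d VG EG k < \<infinity>"
    and "global_def_alliance VG EG k S"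
    and "enat (card S) = gamma_d VG EG k"
    and "\<exists>D. perfect_code S (induced_edges EG S) D"
    and "simple_graph VH EH"
    and "card VH \<ge> 2"
  shows "(\<exists>T. global_def_alliance (VG \<times> VH) (lex_edges EG EH) k T)
    \<and> (k \<ge> 2 \<longrightarrow>
        gamma_d (VG \<times> VH) (lex_edges EG EH) k
          \<le> enat (card VH * (card S - domination_number S (induced_edges EG S))
                  + domination_number S (induced_edges EG S)))"
proof -
  note k1 = assms(1)
  have finG: "finite VG" and symG: "\<And>u v. EG u v \<Longrightarrow> EG v u" and irrG: "\<And>u. \<not> EG u u"
    and inG: "\<And>u v. EG u v \<Longrightarrow> u \<in> VG \<and> v \<in> VG"
    using assms(2) unfolding simple_graph_def by auto
  have finH: "finite VH" using assms(8) card.infinite by fastforce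
  define n where "n = card VH"
  have n2: "n \<ge> 2" using assms(8) n_def by simp
  obtain h0 where h0: "h0 \<in> VH" using n2 n_def by fastforce
  have S: "S \<noteq> {}" "S \<subseteq> VG" "\<forall>v \<in> VG - S. \<exists>u \<in> S. EG u v"
    "\<And>v. v \<in> S \<Longrightarrow> int (card (nbhd_in EG S v)) \<ge> int (card (nbhd_in EG (VG - S) v)) + k"
    using assms(4) unfolding global_def_alliance_def by auto
  have finS: "finite S" using S(2) finG finite_subset by blast
  define E2 where "E2 = lex_edges EG EH"
  have E2: "\<And>u h v h'. E2 (u,h) (v,h') \<longleftrightarrow> EG u v \<or> (u = v \<and> EH h h')"
    unfolding E2_def lex_edges_def by simp
  have finP: "finite (VG \<times> VH)" using finG finH by simp
  have finN: "\<And>X v. X \<subseteq> VG \<times> VH \<Longrightarrow> finite (nbhd_in E2 X v)"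
    unfolding nbhd_in_def using finP by (metis (no_types, lifting) finite_subset mem_Collect_eq subsetI)
  have cardA: "\<And>A. finite A \<Longrightarrow> card (A \<times> VH) = card A * n" using n_def by (simp add: card_cartesian_product)
  have nbA: "\<And>y. nbhd_in EG S y = {u \<in> S. EG u y}" unfolding nbhd_in_def by simp
  have finA: "\<And>y. finite (nbhd_in EG S y)" using finS unfolding nbhd_in_def by simp
  have finB: "\<And>y. finite (nbhd_in EG (VG - S) y)" using finG unfolding nbhd_in_def by simp
  have part1: "global_def_alliance (VG \<times> VH) E2 k (S \<times> VH)"
    unfolding global_def_alliance_def
  proof (intro conjI ballI)
    show "S \<times> VH \<noteq> {}" using S(1) h0 by auto
    show "S \<times> VH \<subseteq> VG \<times> VH" using S(2) by auto
  next
    fix p assume p: "p \<in> VG \<times> VH - S \<times> VH"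
    then obtain g h where gh: "p = (g,h)" "g \<in> VG - S" "h \<in> VH" by auto
    then obtain u where "u \<in> S" "EG u g" using S(3) by auto
    then show "\<exists>q \<in> S \<times> VH. E2 q p" using gh E2 by auto
  next
    fix p assume p: "p \<in> S \<times> VH"
    then obtain y h where yh: "p = (y,h)" "y \<in> S" "h \<in> VH" by auto
    define A where "A = nbhd_in EG S y"
    define B where "B = nbhd_in EG (VG - S) y"
    have ab: "int (card A) \<ge> int (card B) + k" using S(4) yh A_def B_def by auto
    have sub1: "A \<times> VH \<subseteq> nbhd_in E2 (S \<times> VH) p"
    proof
      fix q assume q: "q \<in> A \<times> VH"
      obtain u h' where qq: "q = (u,h')" by (cases q)
      have u: "u \<in> S" "h' \<in> VH" "EG u y" using q qq unfolding A_def nbhd_in_def by auto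
      have "E2 (u,h') (y,h)" using u E2 by simp
      then show "q \<in> nbhd_in E2 (S \<times> VH) p" using u qq yh unfolding nbhd_in_def by auto
    qed
    have sub2: "nbhd_in E2 (VG \<times> VH - S \<times> VH) p \<subseteq> B \<times> VH"
    proof
      fix q assume q: "q \<in> nbhd_in E2 (VG \<times> VH - S \<times> VH) p"
      obtain u h' where qq: "q = (u,h')" by (cases q)
      have u: "u \<in> VG" "h' \<in> VH" "u \<notin> S" "E2 (u,h') (y,h)" using q qq yh unfolding nbhd_in_def by auto
      have "EG u y" using u(3,4) yh(2) E2 by metis
      then show "q \<in> B \<times> VH" using u qq unfolding B_def nbhd_in_def by auto
    qed
    have fI: "finite (nbhd_in E2 (S \<times> VH) p)" using finN[of "S \<times> VH"] S(2) by blast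
    have "card (A \<times> VH) \<le> card (nbhd_in E2 (S \<times> VH) p)" by (rule card_mono[OF fI sub1])
    then have c1: "card (nbhd_in E2 (S \<times> VH) p) \<ge> card A * n"
      using cardA[OF finA[of y]] A_def by simp
    have fB: "finite (B \<times> VH)" using finB[of y] finH B_def by simp
    have "card (nbhd_in E2 (VG \<times> VH - S \<times> VH) p) \<le> card (B \<times> VH)" by (rule card_mono[OF fB sub2])
    then have c2: "card (nbhd_in E2 (VG \<times> VH - S \<times> VH) p) \<le> card B * n"
      using cardA[OF finB[of y]] B_def by simp
    show "int (card (nbhd_in E2 (S \<times> VH) p)) \<ge> int (card (nbhd_in E2 (VG \<times> VH - S \<times> VH) p)) + k"
      by (rule a1[OF ab _ k1 ic1[OF c1] ic0[OF c2]]) (use n2 in simp)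
  qed
  have part2: "gamma_d (VG \<times> VH) E2 k
          \<le> enat (n * (card S - domination_number S (induced_edges EG S))
                  + domination_number S (induced_edges EG S))" if k2: "k \<ge> 2"
  proof -
    obtain D where D: "perfect_code S (induced_edges EG S) D" using assms(6) by blast
    have DS: "D \<subseteq> S" using D unfolding perfect_code_def by simp
    have finD: "finite D" using DS finS finite_subset by blast
    have uq: "\<And>v. v \<in> S \<Longrightarrow> \<exists>!x. x \<in> D \<and> v \<in> closed_nbhd S (induced_edges EG S) x"
      using D unfolding perfect_code_def by simp
    have cn: "\<And>v x. x \<in> S \<Longrightarrow> v \<in> closed_nbhd S (induced_edges EG S) x \<longleftrightarrow> v = x \<or> (v \<in> S \<and> EG x v)"
      unfolding closed_nbhd_def induced_edges_def by auto
    have indep: "\<And>x u. x \<in> D \<Longrightarrow> u \<in> D \<Longrightarrow> EG x u \<Longrightarrow> False"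
    proof -
      fix x u assume xu: "x \<in> D" "u \<in> D" "EG x u"
      have "u \<in> S" using xu DS by auto
      then have "x = u" using uq[of u] cn xu DS by blast
      then show False using xu irrG by simp
    qed
    have own: "\<And>y. y \<in> S - D \<Longrightarrow> \<exists>x \<in> D. EG x y \<and> (\<forall>x' \<in> D. EG x' y \<longrightarrow> x' = x)"
    proof -
      fix y assume y: "y \<in> S - D"
      obtain x where x: "x \<in> D" "y \<in> closed_nbhd S (induced_edges EG S) x" using uq[of y] y by blast
      have xS: "x \<in> S" using x(1) DS by blast
      have "y = x \<or> (y \<in> S \<and> EG x y)" using cn[OF xS, of y] x(2) by simp
      moreover have "y \<noteq> x" using x(1) y by blast
      ultimately have "EG x y" by blast
      moreover have "\<forall>x' \<in> D. EG x' y \<longrightarrow> x' = x"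
      proof (intro ballI impI)
        fix x' assume x': "x' \<in> D" "EG x' y"
        have x'S: "x' \<in> S" using x'(1) DS by blast
        have "y \<in> closed_nbhd S (induced_edges EG S) x'" using cn[OF x'S, of y] x' y by simp
        then show "x' = x" using uq[of y] y x(1,2) x'(1) by blast
      qed
      ultimately show "\<exists>x \<in> D. EG x y \<and> (\<forall>x' \<in> D. EG x' y \<longrightarrow> x' = x)" using x by blast
    qed
    define T where "T = (S - D) \<times> VH \<union> D \<times> {h0}"
    have TP: "T \<subseteq> VG \<times> VH" using S(2) DS h0 unfolding T_def by auto
    have outfin: "finite (VG \<times> VH - T)" using finP by simp
    have gT: "global_def_alliance (VG \<times> VH) E2 k T"
      unfolding global_def_alliance_def
    proof (intro conjI ballI)
      show "T \<noteq> {}" using S(1) h0 unfolding T_def by auto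
      show "T \<subseteq> VG \<times> VH" by (rule TP)
    next
      fix p assume p: "p \<in> VG \<times> VH - T"
      then obtain g h where gh: "p = (g,h)" "g \<in> VG" "h \<in> VH" by auto
      show "\<exists>q \<in> T. E2 q p"
      proof (cases "g \<in> S")
        case False
        then obtain u where u: "u \<in> S" "EG u g" using S(3) gh by auto
        show ?thesis
        proof (cases "u \<in> D")
          case True then show ?thesis using u gh E2 unfolding T_def by (intro bexI[of _ "(u,h0)"]) auto
        next
          case False then show ?thesis using u gh E2 unfolding T_def by (intro bexI[of _ "(u,h)"]) auto
        qed
      next
        case True
        then have gD: "g \<in> D" using p gh unfolding T_def by auto
        have "int (card (nbhd_in EG S g)) \<ge> 1" using S(4)[OF True] k1 by linarith
        then have "nbhd_in EG S g \<noteq> {}" by auto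
        then obtain u where u: "u \<in> S" "EG u g" unfolding nbhd_in_def by auto
        have "u \<notin> D" using indep gD u symG by blast
        then show ?thesis using u gh E2 unfolding T_def by (intro bexI[of _ "(u,h)"]) auto
      qed
    next
      fix p assume p: "p \<in> T"
      then obtain y h where yh: "p = (y,h)" "y \<in> S" "h \<in> VH" using DS h0 unfolding T_def by auto
      define A where "A = nbhd_in EG S y"
      define B where "B = nbhd_in EG (VG - S) y"
      have ab: "int (card A) \<ge> int (card B) + k" using S(4) yh A_def B_def by auto
      have finI: "finite (nbhd_in E2 T p)" using finN[OF TP] by blast
      have cVH: "card (VH - {h0}) = n - 1" using h0 finH n_def by simp
      show "int (card (nbhd_in E2 T p)) \<ge> int (card (nbhd_in E2 (VG \<times> VH - T) p)) + k"
      proof (cases "y \<in> D")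
        case True
        have hh: "h = h0" using p yh True unfolding T_def by auto
        have sub1: "A \<times> VH \<subseteq> nbhd_in E2 T p"
        proof
          fix q assume q: "q \<in> A \<times> VH"
          obtain u h' where qq: "q = (u,h')" by (cases q)
          have u: "u \<in> S" "h' \<in> VH" "EG u y" using q qq unfolding A_def nbhd_in_def by auto
          have "u \<notin> D" using indep[of u y] u True by blast
          then have "q \<in> T" using u qq unfolding T_def by simp
          moreover have "E2 (u,h') (y,h)" using u E2 by simp
          ultimately show "q \<in> nbhd_in E2 T p" using qq yh unfolding nbhd_in_def by auto
        qed
        have sub2: "nbhd_in E2 (VG \<times> VH - T) p \<subseteq> B \<times> VH \<union> {y} \<times> (VH - {h0})"
        proof
          fix q assume q: "q \<in> nbhd_in E2 (VG \<times> VH - T) p"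
          obtain u h' where qq: "q = (u,h')" by (cases q)
          have u: "u \<in> VG" "h' \<in> VH" "(u,h') \<notin> T" "E2 (u,h') (y,h)" using q qq yh unfolding nbhd_in_def by auto
          show "q \<in> B \<times> VH \<union> {y} \<times> (VH - {h0})"
          proof (cases "u = y")
            case True
            then have "h' \<noteq> h0" using u(3) \<open>y \<in> D\<close> unfolding T_def by auto
            then show ?thesis using True u qq by simp
          next
            case False
            then have e: "EG u y" using u(4) E2 by metis
            have "u \<notin> S"
            proof
              assume "u \<in> S"
              then have "u \<in> D" using u(2,3) unfolding T_def by auto
              then show False using indep[of u y] e \<open>y \<in> D\<close> by blast
            qed
            then show ?thesis using e u qq unfolding B_def nbhd_in_def by simp
          qed
        qed
        have "card (A \<times> VH) \<le> card (nbhd_in E2 T p)" by (rule card_mono[OF finI sub1])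
        then have c1: "card (nbhd_in E2 T p) \<ge> card A * n"
          using cardA[OF finA[of y]] A_def by simp
        have fB: "finite (B \<times> VH \<union> {y} \<times> (VH - {h0}))" using finB[of y] finH B_def by simp
        have "card (nbhd_in E2 (VG \<times> VH - T) p) \<le> card (B \<times> VH \<union> {y} \<times> (VH - {h0}))"
          by (rule card_mono[OF fB sub2])
        also have "\<dots> \<le> card (B \<times> VH) + card ({y} \<times> (VH - {h0}))" by (rule card_Un_le)
        also have "\<dots> = card B * n + (n - 1)" using finB[of y] B_def cVH n_def by (simp add: card_cartesian_product)
        finally have c2: "card (nbhd_in E2 (VG \<times> VH - T) p) \<le> card B * n + (n - 1)" .
        show ?thesis
          by (rule a2[OF ab _ k1 ic1[OF c1] ic2[OF c2 n2]]) (use n2 in simp)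
      next
        case False
        then have yD: "y \<in> S - D" using yh by simp
        from own[OF yD] obtain x where x0: "x \<in> D" "EG x y \<and> (\<forall>x' \<in> D. EG x' y \<longrightarrow> x' = x)"
          by (rule bexE)
        have x: "x \<in> D" "EG x y" using x0(1) conjunct1[OF x0(2)] by - assumption+
        have x3: "\<forall>x' \<in> D. EG x' y \<longrightarrow> x' = x" by (rule conjunct2[OF x0(2)])
        have xA: "x \<in> A" using x DS unfolding A_def nbhd_in_def by auto
        have sub1: "(A - {x}) \<times> VH \<union> {(x,h0)} \<subseteq> nbhd_in E2 T p"
        proof
          fix q assume q: "q \<in> (A - {x}) \<times> VH \<union> {(x,h0)}"
          obtain u h' where qq: "q = (u,h')" by (cases q)
          show "q \<in> nbhd_in E2 T p"
          proof (cases "q = (x,h0)")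
            case True
            have "E2 (x,h0) (y,h)" using x E2 by simp
            then show ?thesis using True x(1) unfolding nbhd_in_def T_def yh(1) by simp
          next
            case False
            then have u: "u \<in> S" "u \<noteq> x" "h' \<in> VH" "EG u y" using q qq unfolding A_def nbhd_in_def by auto
            have "u \<notin> D"
            proof
              assume "u \<in> D"
              then have "u = x" using x3 u(4) by metis
              then show False using u(2) by simp
            qed
            then have "q \<in> T" using u qq unfolding T_def by simp
            moreover have "E2 (u,h') (y,h)" using u E2 by simp
            ultimately show "q \<in> nbhd_in E2 T p" using qq yh unfolding nbhd_in_def by auto
          qed
        qed
        have disj: "((A - {x}) \<times> VH) \<inter> {(x,h0)} = {}" by auto
        have fA: "finite A" using finA[of y] A_def by simp
        have "card ((A - {x}) \<times> VH \<union> {(x,h0)}) = card ((A - {x}) \<times> VH) + card {(x,h0)}"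
          by (rule card_Un_disjoint[OF _ _ disj]) (use fA finH in simp_all)
        also have "card ((A - {x}) \<times> VH) = (card A - 1) * n"
          using fA xA n_def by (simp add: card_cartesian_product)
        finally have "card ((A - {x}) \<times> VH \<union> {(x,h0)}) = (card A - 1) * n + 1" by simp
        moreover have "card A > 0" using fA xA card_gt_0_iff by blast
        then have "card A \<ge> 1" by simp
        ultimately have "card (nbhd_in E2 T p) \<ge> (card A - 1) * n + 1"
          using card_mono[OF finI sub1] by simp
        then have c1: "int (card (nbhd_in E2 T p)) \<ge> (int (card A) - 1) * int n + 1"
          using ic3 \<open>card A \<ge> 1\<close> by blast
        have sub2: "nbhd_in E2 (VG \<times> VH - T) p \<subseteq> B \<times> VH \<union> {x} \<times> (VH - {h0})"
        proof
          fix q assume q: "q \<in> nbhd_in E2 (VG \<times> VH - T) p"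
          obtain u h' where qq: "q = (u,h')" by (cases q)
          have u: "u \<in> VG" "h' \<in> VH" "(u,h') \<notin> T" "E2 (u,h') (y,h)" using q qq yh unfolding nbhd_in_def by auto
          have uy: "u \<noteq> y" using u(2,3) yh(2) False unfolding T_def by auto
          then have e: "EG u y" using u(4) E2 by metis
          show "q \<in> B \<times> VH \<union> {x} \<times> (VH - {h0})"
          proof (cases "u \<in> S")
            case True
            then have "u \<in> D" using u(2,3) unfolding T_def by auto
            then have "u = x" using x3 e by metis
            moreover have "h' \<noteq> h0" using u(3) \<open>u \<in> D\<close> unfolding T_def by auto
            ultimately show ?thesis using u qq by simp
          next
            case False
            then show ?thesis using e u qq unfolding B_def nbhd_in_def by simp
          qed
        qed
        have fB: "finite (B \<times> VH \<union> {x} \<times> (VH - {h0}))" using finB[of y] finH B_def by simp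
        have "card (nbhd_in E2 (VG \<times> VH - T) p) \<le> card (B \<times> VH \<union> {x} \<times> (VH - {h0}))"
          by (rule card_mono[OF fB sub2])
        also have "\<dots> \<le> card (B \<times> VH) + card ({x} \<times> (VH - {h0}))" by (rule card_Un_le)
        also have "\<dots> = card B * n + (n - 1)" using finB[of y] B_def cVH n_def by (simp add: card_cartesian_product)
        finally have c2: "card (nbhd_in E2 (VG \<times> VH - T) p) \<le> card B * n + (n - 1)" .
        show ?thesis
          by (rule a3[OF ab _ k2 c1 ic2[OF c2 n2]]) (use n2 in simp)
      qed
    qed
    have cT: "card T = n * (card S - card D) + card D"
    proof -
      have disj: "((S - D) \<times> VH) \<inter> (D \<times> {h0}) = {}" by auto
      have "card T = card ((S - D) \<times> VH) + card (D \<times> {h0})"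
        unfolding T_def using card_Un_disjoint[OF _ _ disj] finS finD finH by simp
      then show ?thesis using finS finD DS n_def by (simp add: card_Diff_subset card_cartesian_product)
    qed
    have domD: "dominating S (induced_edges EG S) D"
      unfolding dominating_def
    proof (intro conjI ballI)
      show "D \<subseteq> S" by (rule DS)
      fix v assume "v \<in> S - D"
      then obtain x where "x \<in> D" "EG x v" using own by blast
      then show "\<exists>u \<in> D. induced_edges EG S u v" using DS \<open>v \<in> S - D\<close> unfolding induced_edges_def by auto
    qed
    have finDom: "finite (card ` {D. dominating S (induced_edges EG S) D})"
    proof -
      have "{D. dominating S (induced_edges EG S) D} \<subseteq> Pow S" unfolding dominating_def by auto
      then show ?thesis using finS by (meson finite_Pow_iff finite_imageI finite_subset)
    qed
    have gle: "domination_number S (induced_edges EG S) \<le> card D"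
      unfolding domination_number_def using finDom domD by (intro Min_le) auto
    have dle: "card D \<le> card S" using DS finS card_mono by blast
    have "gamma_d (VG \<times> VH) E2 k \<le> enat (card T)" by (rule gd_le[OF gT])
    also have "\<dots> \<le> enat (n * (card S - domination_number S (induced_edges EG S))
                  + domination_number S (induced_edges EG S))"
      unfolding cT using a4[OF gle dle, of n] n2 by simp
    finally show ?thesis .
  qed
  show ?thesis using part1 part2 unfolding E2_def n_def by blast
qed

end
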